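(* Let $X$ be a Polish topological vector space over $\mathbb K\in\{\mathbb R,\mathbb C\}$, let $T$ be a continuous linear operator on $X$, and let $a,b\in\mathbb K$. Assume that $aT$ and $bT$ each admit an invariant Borel probability measure different from $\delta_0$. Then $aT$ and $bT$ are orthogonal if and only if $|a|\neq|b|$. More precisely: if $|a|\ne|b|$ then $aT$ and $bT$ are orthogonal, and if $|a|=|b|$ then there is a Borel probability measure different from $\delta_0$ which is invariant under both $aT$ and $bT$.
   Context: Two continuous linear operators $T_1,T_2$ on $X$ are called orthogonal if whenever $m_1$ is a $T_1$-invariant Borel probability measure and $m_2$ is a $T_2$-invariant Borel probability measure with $m_1(\{0\})=0=m_2(\{0\})$, the measures $m_1$ and $m_2$ are mutually singular. A measure $m$ is $T$-invariant if $m(T^{-1}(A))=m(A)$ for all Borel $A$. *)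

theory Defs
  imports "HOL-Analysis.Analysis" "HOL-Probability.Probability"
begin

text \<open>A Polish topological vector space over the scalar field 'k (real or complex,
  or any real normed field; by Gelfand-Mazur these are R and C up to isomorphism).\<close>
definition polish_tvs :: "('k::real_normed_field \<Rightarrow> 'a::{ab_group_add,polish_space} \<Rightarrow> 'a) \<Rightarrow> bool" where
  "polish_tvs smult_op \<longleftrightarrow>
     vector_space smult_op \<and>
     continuous_on UNIV (\<lambda>p::'a \<times> 'a. fst p + snd p) \<and>
     continuous_on UNIV (\<lambda>p::'k \<times> 'a. smult_op (fst p) (snd p))"

definition borel_prob :: "'a::topological_space measure \<Rightarrow> bool" where
  "borel_prob m \<longleftrightarrow> prob_space m \<and> sets m = sets borel"

definition invariant_measure :: "('a::topological_space \<Rightarrow> 'a) \<Rightarrow> 'a measure \<Rightarrow> bool" where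
  "invariant_measure T m \<longleftrightarrow> (\<forall>A\<in>sets borel. emeasure m (T -` A) = emeasure m A)"

definition mutually_singular :: "'a::topological_space measure \<Rightarrow> 'a measure \<Rightarrow> bool" where
  "mutually_singular m1 m2 \<longleftrightarrow>
     (\<exists>A\<in>sets borel. emeasure m1 A = 0 \<and> emeasure m2 (UNIV - A) = 0)"

definition orthogonal_ops :: "('a::{topological_space,zero} \<Rightarrow> 'a) \<Rightarrow> ('a \<Rightarrow> 'a) \<Rightarrow> bool" where
  "orthogonal_ops T1 T2 \<longleftrightarrow>
     (\<forall>m1 m2. borel_prob m1 \<and> invariant_measure T1 m1 \<and>
              borel_prob m2 \<and> invariant_measure T2 m2 \<and>
              emeasure m1 {0} = 0 \<and> emeasure m2 {0} = 0
              \<longrightarrow> mutually_singular m1 m2)"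

end

theory Submission
  imports Defs "HOL-Computational_Algebra.Fundamental_Theorem_Algebra"
begin

lemma roots_unity_prod1:
  fixes s :: complex assumes n: "n > 0"
  shows "(\<Prod>k<n. (s - cis (2 * pi * real k / real n))) = s ^ n - 1"
proof -
  define p :: "complex poly" where "p = [:-1:] + monom 1 n"
  have pp: "poly p a = a ^ n - 1" for a by (simp add: p_def poly_monom)
  have pd: "poly (pderiv p) a = of_nat n * a ^ (n - 1)" for a
    by (simp add: p_def pderiv_add pderiv_monom poly_monom)
  have rs: "rsquarefree p"
    unfolding rsquarefree_roots
  proof (intro allI notI)
    fix a assume h: "poly p a = 0 \<and> poly (pderiv p) a = 0"
    then have "a = 0" using n by (simp add: pd)
    with h n show False by (simp add: pp zero_power)
  qed
  have lc: "lead_coeff p = 1"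
    unfolding p_def using n by (subst lead_coeff_add_le) (simp_all add: degree_monom_eq)
  have eq: "p = (\<Prod>z | poly p z = 0. [:- z, 1:])"
    using complex_poly_decompose_rsquarefree[OF rs] lc by simp
  have "s ^ n - 1 = poly p s" by (simp add: pp)
  also have "\<dots> = poly (\<Prod>z | poly p z = 0. [:- z, 1:]) s"
    by (subst eq) (rule refl)
  also have "\<dots> = (\<Prod>z | poly p z = 0. s - z)"
    by (simp add: poly_prod)
  also have "\<dots> = (\<Prod>z | z ^ n = 1. s - z)" by (simp add: pp)
  also have "\<dots> = (\<Prod>k<n. (s - cis (2 * pi * real k / real n)))"
    by (rule prod.reindex_bij_betw[OF Complex.bij_betw_roots_unity[OF n], symmetric])
  finally show ?thesis by simp
qed

lemma mpr_add: "map_poly (of_real :: real \<Rightarrow> 'k::real_normed_field) (p + q) = map_poly of_real p + map_poly of_real q"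
  by (intro poly_eqI) (simp add: coeff_map_poly)
lemma mpr_diff: "map_poly (of_real :: real \<Rightarrow> 'k::real_normed_field) (p - q) = map_poly of_real p - map_poly of_real q"
  by (intro poly_eqI) (simp add: coeff_map_poly)
lemma mpr_mult: "map_poly (of_real :: real \<Rightarrow> 'k::real_normed_field) (p * q) = map_poly of_real p * map_poly of_real q"
  by (intro poly_eqI) (simp add: coeff_map_poly coeff_mult)
lemma mpr_one: "map_poly (of_real :: real \<Rightarrow> 'k::real_normed_field) 1 = 1"
  by simp
lemma mpr_power: "map_poly (of_real :: real \<Rightarrow> 'k::real_normed_field) (p ^ n) = map_poly of_real p ^ n"
  by (induction n) (simp_all add: mpr_mult)
lemma mpr_prod: "map_poly (of_real :: real \<Rightarrow> 'k::real_normed_field) (\<Prod>i\<in>A. f i) = (\<Prod>i\<in>A. map_poly of_real (f i))"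
  by (induction A rule: infinite_finite_induct) (simp_all add: mpr_mult)
lemma mpr_sum: "map_poly (of_real :: real \<Rightarrow> 'k::real_normed_field) (\<Sum>i\<in>A. f i) = (\<Sum>i\<in>A. map_poly of_real (f i))"
  by (induction A rule: infinite_finite_induct) (simp_all add: mpr_add)
lemma mpr_const: "map_poly (of_real :: real \<Rightarrow> 'k::real_normed_field) [:c:] = [:of_real c:]"
  by (simp add: map_poly_pCons)
lemma mpr_smult: "map_poly (of_real :: real \<Rightarrow> 'k::real_normed_field) (smult c p) = smult (of_real c) (map_poly of_real p)"
  by (intro poly_eqI) (simp add: coeff_map_poly)
lemma mpr_inj: "map_poly (of_real :: real \<Rightarrow> 'k::real_normed_field) p = map_poly of_real q \<Longrightarrow> p = q"
  by (metis (no_types, lifting) coeff_map_poly of_real_0 of_real_eq_iff poly_eqI)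

definition qp :: "complex \<Rightarrow> real poly" where
  "qp \<zeta> = [:(cmod \<zeta>)^2, -2 * Re \<zeta>, 1:]"

lemma poly_qp: "poly (map_poly of_real (qp \<zeta>)) (x::'k::real_normed_field) = x^2 - of_real (2 * Re \<zeta>) * x + of_real ((cmod \<zeta>)^2)"
  by (simp add: qp_def map_poly_pCons algebra_simps power2_eq_square)

lemma poly_qp_complex: "poly (map_poly of_real (qp \<zeta>)) (y::complex) = (y - \<zeta>) * (y - cnj \<zeta>)"
proof -
  have "(y - \<zeta>) * (y - cnj \<zeta>) = y^2 - (\<zeta> + cnj \<zeta>) * y + \<zeta> * cnj \<zeta>"
    by (simp add: algebra_simps power2_eq_square)
  also have "\<zeta> + cnj \<zeta> = of_real (2 * Re \<zeta>)" by (simp add: complex_add_cnj)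
  also have "\<zeta> * cnj \<zeta> = of_real ((cmod \<zeta>)^2)" by (metis complex_norm_square)
  finally show ?thesis by (simp add: poly_qp)
qed

lemma roots_unity_prod:
  fixes t w :: complex assumes n: "n > 0"
  shows "(\<Prod>k<n. (t - cis (2 * pi * real k / real n) * w)) = t ^ n - w ^ n"
proof (cases "w = 0")
  case True then show ?thesis using n by (simp add: zero_power)
next
  case False
  have "(\<Prod>k<n. (t - cis (2 * pi * real k / real n) * w)) = (\<Prod>k<n. w * (t / w - cis (2 * pi * real k / real n)))"
    using False by (intro prod.cong) (auto simp: field_simps)
  also have "\<dots> = w ^ n * (\<Prod>k<n. (t / w - cis (2 * pi * real k / real n)))"
    by (simp add: prod.distrib)
  also have "\<dots> = w ^ n * ((t / w) ^ n - 1)" by (simp add: roots_unity_prod1[OF n])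
  also have "\<dots> = t ^ n - w ^ n" using False by (simp add: field_simps power_divide)
  finally show ?thesis .
qed

definition Pp :: "nat \<Rightarrow> complex \<Rightarrow> complex \<Rightarrow> real poly" where
  "Pp n z w = (\<Sum>i\<le>n. monom (real (n choose i) * Re (w ^ n * (- cnj z) ^ (n - i))) i)"

lemma poly_Pp: "poly (map_poly of_real (Pp n z w)) (x::'k::real_normed_field) =
   (\<Sum>i\<le>n. of_real (real (n choose i) * Re (w ^ n * (- cnj z) ^ (n - i))) * x ^ i)"
  by (simp add: Pp_def mpr_sum map_poly_monom poly_sum poly_monom)

lemma aux_re2: "2 * (complex_of_real (real m * Re X) * Y) = (of_nat m * X + of_nat m * cnj X) * Y"
  by (simp add: complex_eq_iff algebra_simps)

lemma poly_Pp_complex: "2 * poly (map_poly of_real (Pp n z w)) (y::complex) =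
   w ^ n * (y - cnj z) ^ n + cnj w ^ n * (y - z) ^ n"
proof -
  have "2 * poly (map_poly of_real (Pp n z w)) y =
     (\<Sum>i\<le>n. (of_nat (n choose i) * (w ^ n * (- cnj z) ^ (n - i)) + of_nat (n choose i) * cnj (w ^ n * (- cnj z) ^ (n - i))) * y ^ i)"
    unfolding poly_Pp sum_distrib_left
    by (intro sum.cong refl) (simp only: aux_re2)
  also have "\<dots> = w ^ n * (\<Sum>i\<le>n. of_nat (n choose i) * y ^ i * (- cnj z) ^ (n - i))
      + cnj w ^ n * (\<Sum>i\<le>n. of_nat (n choose i) * y ^ i * (- z) ^ (n - i))"
    by (simp add: sum_distrib_left sum.distrib algebra_simps)
  also have "\<dots> = w ^ n * (y - cnj z) ^ n + cnj w ^ n * (y - z) ^ n"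
    by (simp add: binomial_ring[symmetric])
  finally show ?thesis .
qed

lemma key_poly_identity:
  assumes n: "n > 0"
  shows "(\<Prod>k<n. qp (z + cis (2 * pi * real k / real n) * w)) =
     qp z ^ n - smult 2 (Pp n z w) + [:(cmod w) ^ (2 * n):]"
proof -
  let ?L = "(\<Prod>k<n. qp (z + cis (2 * pi * real k / real n) * w))"
  let ?R = "qp z ^ n - smult 2 (Pp n z w) + [:(cmod w) ^ (2 * n):]"
  have "poly (map_poly of_real ?L) y = poly (map_poly of_real ?R) y" for y :: complex
  proof -
    have "poly (map_poly of_real ?L) y = (\<Prod>k<n. ((y - z) - cis (2 * pi * real k / real n) * w) * ((y - cnj z) - cnj (cis (2 * pi * real k / real n) * w)))"
      by (simp add: mpr_prod poly_prod poly_qp_complex algebra_simps)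
    also have "\<dots> = (\<Prod>k<n. ((y - z) - cis (2 * pi * real k / real n) * w)) * cnj (\<Prod>k<n. (cnj (y - cnj z) - cis (2 * pi * real k / real n) * w))"
      by (simp add: prod.distrib)
    also have "\<dots> = ((y - z) ^ n - w ^ n) * cnj ((cnj y - z) ^ n - w ^ n)"
      by (simp add: roots_unity_prod[OF n])
    also have "\<dots> = ((y - z) * (y - cnj z)) ^ n - (w ^ n * (y - cnj z) ^ n + cnj w ^ n * (y - z) ^ n) + (w * cnj w) ^ n"
    proof -
      have c: "cnj ((cnj y - z) ^ n - w ^ n) = (y - cnj z)^n - cnj w ^ n" by simp
      show ?thesis by (simp only: c power_mult_distrib) algebra
    qed
    also have "\<dots> = poly (map_poly of_real ?R) y"
    proof -
      have cns: "complex_of_real (cmod w ^ (2*n)) = (w * cnj w)^n"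
        by (metis complex_norm_square of_real_power power_mult)
      have "poly (map_poly of_real ?R) y = (poly (map_poly of_real (qp z)) y) ^ n - 2 * poly (map_poly of_real (Pp n z w)) y + of_real (cmod w ^ (2*n))"
        by (simp add: mpr_add mpr_diff mpr_power mpr_smult mpr_const poly_power)
      also have "\<dots> = ((y - z) * (y - cnj z)) ^ n - (w ^ n * (y - cnj z) ^ n + cnj w ^ n * (y - z) ^ n) + (w * cnj w) ^ n"
        using cns by (simp only: poly_qp_complex poly_Pp_complex)
      finally show ?thesis by simp
    qed
    finally show ?thesis .
  qed
  then have "map_poly (of_real :: real \<Rightarrow> complex) ?L = map_poly of_real ?R"
    by (intro poly_eq_poly_eq_iff[THEN iffD1] ext)
  then show ?thesis by (rule mpr_inj)
qed

definition FF :: "'k::real_normed_field \<Rightarrow> complex \<Rightarrow> real" where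
  "FF x z = norm (x^2 - of_real (2 * Re z) * x + of_real ((cmod z)^2))"

lemma FF_poly: "FF x z = norm (poly (map_poly of_real (qp z)) x)"
  by (simp add: FF_def poly_qp)

lemma norm3: "norm (a - b + c) \<le> norm a + norm b + norm (c::'a::real_normed_vector)"
  by (smt (verit) norm_triangle_ineq norm_triangle_ineq4)

lemma FF_nonneg: "0 \<le> FF x z" by (simp add: FF_def)

lemma norm_ofreal_aux:
  fixes y :: "'k::real_normed_field" and X :: complex
  assumes "\<bar>Re X\<bar> \<le> B" "0 \<le> r"
  shows "norm (of_real (r * Re X) * y) \<le> r * B * norm y"
proof -
  have "norm (of_real (r * Re X) * y) = r * \<bar>Re X\<bar> * norm y"
    using assms(2) by (simp add: norm_mult abs_mult)
  also have "\<dots> \<le> r * B * norm y"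
    using assms by (intro mult_right_mono mult_left_mono) auto
  finally show ?thesis .
qed

lemma norm_Pp_le:
  fixes x :: "'k::real_normed_field"
  shows "norm (poly (map_poly of_real (Pp n z w)) x) \<le> (cmod w * (norm x + cmod z)) ^ n"
proof -
  have "norm (poly (map_poly of_real (Pp n z w)) x) \<le>
     (\<Sum>i\<le>n. norm (of_real (real (n choose i) * Re (w ^ n * (- cnj z) ^ (n - i))) * x ^ i))"
    unfolding poly_Pp by (rule norm_sum)
  also have "\<dots> \<le> (\<Sum>i\<le>n. real (n choose i) * (cmod w ^ n * cmod z ^ (n - i)) * norm x ^ i)"
  proof (intro sum_mono)
    fix i
    have "\<bar>Re (w ^ n * (- cnj z) ^ (n - i))\<bar> \<le> cmod (w ^ n * (- cnj z) ^ (n - i))"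
      by (rule abs_Re_le_cmod)
    also have "\<dots> = cmod w ^ n * cmod z ^ (n - i)" by (simp add: norm_mult norm_power)
    finally have "\<bar>Re (w ^ n * (- cnj z) ^ (n - i))\<bar> \<le> cmod w ^ n * cmod z ^ (n - i)" .
    then show "norm (of_real (real (n choose i) * Re (w ^ n * (- cnj z) ^ (n - i))) * x ^ i :: 'k)
      \<le> real (n choose i) * (cmod w ^ n * cmod z ^ (n - i)) * norm x ^ i"
      using norm_ofreal_aux[of "w ^ n * (- cnj z) ^ (n - i)" "cmod w ^ n * cmod z ^ (n - i)" "real (n choose i)" "x ^ i"]
      by (simp add: norm_power mult.assoc)
  qed
  also have "\<dots> = cmod w ^ n * (\<Sum>i\<le>n. real (n choose i) * norm x ^ i * cmod z ^ (n - i))"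
    by (simp add: sum_distrib_left algebra_simps)
  also have "\<dots> = cmod w ^ n * (norm x + cmod z) ^ n"
    by (simp add: binomial_ring)
  also have "\<dots> = (cmod w * (norm x + cmod z)) ^ n" by (simp add: power_mult_distrib)
  finally show ?thesis .
qed

lemma gm_step_n:
  fixes x :: "'k::real_normed_field"
  assumes min: "\<And>z'. c \<le> FF x z'" and fz: "FF x z = c"
  shows "FF x (z + w) * c ^ m \<le> c ^ Suc m + 2 * (cmod w * (norm x + cmod z)) ^ Suc m + (cmod w ^ 2) ^ Suc m"
proof -
  define n where "n = Suc m"
  have n: "n > 0" by (simp add: n_def)
  define \<zeta> where "\<zeta> k = z + cis (2 * pi * real k / real n) * w" for k
  have c0: "0 \<le> c" using fz FF_nonneg by metis
  have "FF x (z + w) * c ^ m = FF x (\<zeta> 0) * (\<Prod>i<m. c)" by (simp add: \<zeta>_def)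
  also have "\<dots> \<le> FF x (\<zeta> 0) * (\<Prod>i<m. FF x (\<zeta> (Suc i)))"
    by (intro mult_left_mono prod_mono) (auto simp: c0 min FF_nonneg)
  also have "\<dots> = (\<Prod>k<n. FF x (\<zeta> k))" unfolding n_def by (rule prod.lessThan_Suc_shift[symmetric])
  also have "\<dots> = norm (poly (map_poly of_real (\<Prod>k<n. qp (\<zeta> k))) x)"
    by (simp add: FF_poly mpr_prod poly_prod prod_norm)
  also have "(\<Prod>k<n. qp (\<zeta> k)) = qp z ^ n - smult 2 (Pp n z w) + [:(cmod w) ^ (2 * n):]"
    unfolding \<zeta>_def by (rule key_poly_identity[OF n])
  also have "norm (poly (map_poly of_real (qp z ^ n - smult 2 (Pp n z w) + [:(cmod w) ^ (2 * n):])) x)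
     = norm ((poly (map_poly of_real (qp z)) x) ^ n - 2 * poly (map_poly of_real (Pp n z w)) x + (of_real ((cmod w) ^ (2 * n)) :: 'k))"
    by (simp add: mpr_add mpr_diff mpr_power mpr_smult mpr_const poly_power)
  also have "\<dots> \<le> norm ((poly (map_poly of_real (qp z)) x) ^ n) + norm (2 * poly (map_poly of_real (Pp n z w)) x) + norm (of_real ((cmod w) ^ (2 * n)) :: 'k)"
    by (rule norm3)
  also have "\<dots> \<le> c ^ n + 2 * (cmod w * (norm x + cmod z)) ^ n + (cmod w ^ 2) ^ n"
  proof -
    have "norm ((poly (map_poly of_real (qp z)) x) ^ n) = c ^ n"
      using fz by (simp add: FF_poly norm_power)
    moreover have "norm (2 * poly (map_poly of_real (Pp n z w)) x) \<le> 2 * (cmod w * (norm x + cmod z)) ^ n"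
      using norm_Pp_le[of n z w x] by (simp add: norm_mult)
    moreover have "norm (of_real ((cmod w) ^ (2 * n)) :: 'k) = (cmod w ^ 2) ^ n"
      by (metis abs_of_nonneg norm_ge_zero norm_of_real power_mult zero_le_power)
    ultimately show ?thesis by linarith
  qed
  finally show ?thesis by (simp add: n_def)
qed

lemma gm_step:
  fixes x :: "'k::real_normed_field"
  assumes min: "\<And>z'. c \<le> FF x z'" and fz: "FF x z = c" and cpos: "c > 0"
    and w1: "cmod w * (norm x + cmod z) < c" and w2: "cmod w ^ 2 < c"
  shows "FF x (z + w) = c"
proof -
  define r1 where "r1 = cmod w * (norm x + cmod z) / c"
  define r2 where "r2 = cmod w ^ 2 / c"
  have r1: "0 \<le> r1" "r1 < 1" using w1 cpos by (auto simp: r1_def)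
  have r2: "0 \<le> r2" "r2 < 1" using w2 cpos by (auto simp: r2_def)
  define g where "g m = c + 2 * c * r1 ^ Suc m + c * r2 ^ Suc m" for m
  have lim: "g \<longlonglongrightarrow> c + 2 * c * 0 + c * 0"
    unfolding g_def
    by (intro tendsto_intros LIMSEQ_Suc LIMSEQ_power_zero) (use r1 r2 in auto)
  have le: "FF x (z + w) \<le> g m" for m
  proof -
    have "FF x (z + w) * c ^ m \<le> c ^ Suc m + 2 * (cmod w * (norm x + cmod z)) ^ Suc m + (cmod w ^ 2) ^ Suc m"
      by (rule gm_step_n[OF min fz])
    also have "\<dots> = g m * c ^ m"
      using cpos by (simp add: g_def r1_def r2_def power_divide field_simps)
    finally show ?thesis using cpos by simp
  qed
  have "FF x (z + w) \<le> c"
    using LIMSEQ_le_const[OF lim] le by auto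
  with min[of "z + w"] show ?thesis by simp
qed

lemma gm_quadratic:
  fixes x :: "'k::real_normed_field"
  shows "\<exists>z. x^2 - of_real (2 * Re z) * x + of_real ((cmod z)^2) = 0"
proof -
  let ?f = "FF x"
  have cont: "continuous_on UNIV ?f" unfolding FF_def by (intro continuous_intros)
  have coer: "?f z \<ge> (cmod z)^2 - 2 * cmod z * norm x - (norm x)^2" for z
  proof -
    have "(cmod z)^2 = norm (of_real ((cmod z)^2) :: 'k)" by (metis abs_of_nonneg norm_of_real zero_le_power2)
    also have "(of_real ((cmod z)^2) :: 'k) = (x^2 - of_real (2 * Re z) * x + of_real ((cmod z)^2)) - x^2 + of_real (2 * Re z) * x"
      by simp
    also have "norm \<dots> \<le> ?f z + norm (x^2) + norm (of_real (2 * Re z) * x)"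
      unfolding FF_def by (rule norm3)
    also have "norm (of_real (2 * Re z) * x :: 'k) \<le> 2 * cmod z * norm x"
      using abs_Re_le_cmod[of z] by (simp add: norm_mult mult_right_mono)
    finally show ?thesis by (simp add: norm_power)
  qed
  define m where "m = norm x"
  define R where "R = 3 * m + ?f 0 + 1"
  have m0: "m \<ge> 0" by (simp add: m_def)
  have f00: "?f 0 \<ge> 0" by (simp add: FF_def)
  have far: "?f z > ?f 0" if "cmod z > R" for z
  proof -
    have "cmod z - 2 * m \<ge> m + ?f 0 + 1" using that by (simp add: R_def)
    moreover have "cmod z \<ge> 3 * m + ?f 0 + 1" using that by (simp add: R_def)
    ultimately have "cmod z * (cmod z - 2 * m) \<ge> (3 * m + ?f 0 + 1) * (m + ?f 0 + 1)"
      using m0 f00 by (intro mult_mono) auto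
    moreover have "(3 * m + ?f 0 + 1) * (m + ?f 0 + 1) > m^2 + ?f 0"
      using m0 f00 by (simp add: algebra_simps power2_eq_square) (smt (verit) mult_nonneg_nonneg)
    ultimately have "(cmod z)^2 - 2 * cmod z * m - m^2 > ?f 0"
      by (simp add: algebra_simps power2_eq_square)
    with coer[of z] show ?thesis by (simp add: m_def)
  qed
  obtain z0 where z0: "z0 \<in> cball 0 R" "\<And>y. y \<in> cball 0 R \<Longrightarrow> ?f z0 \<le> ?f y"
    using continuous_attains_inf[of "cball 0 R" ?f] continuous_on_subset[OF cont]
    using R_def m0 f00 by (auto simp: compact_cball)
  have min: "?f z0 \<le> ?f y" for y
  proof (cases "cmod y \<le> R")
    case True then show ?thesis using z0 by simp
  next
    case False
    then have "?f y > ?f 0" using far by simp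
    moreover have "?f z0 \<le> ?f 0" using z0 R_def m0 f00 by simp
    ultimately show ?thesis by simp
  qed
  define c where "c = ?f z0"
  have "c = 0"
  proof (rule ccontr)
    assume "c \<noteq> 0"
    then have cpos: "c > 0" by (simp add: c_def FF_def)
    define S where "S = {z. ?f z = c}"
    have "closed S" unfolding S_def
      by (rule closed_Collect_eq) (use cont in \<open>auto simp: continuous_on_eq_continuous_within\<close>)
    moreover have "open S"
      unfolding open_dist
    proof
      fix z assume "z \<in> S"
      then have fz: "?f z = c" by (simp add: S_def)
      define d where "d = min (c / (norm x + cmod z + 1)) (sqrt c)"
      have d: "d > 0" using cpos by (simp add: d_def add_nonneg_pos)
      show "\<exists>e>0. \<forall>y. dist y z < e \<longrightarrow> y \<in> S"
      proof (intro exI[of _ d] conjI allI impI d)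
        fix y assume "dist y z < d"
        define w where "w = y - z"
        have wd: "cmod w < d" using \<open>dist y z < d\<close> by (simp add: w_def dist_norm)
        have "cmod w * (norm x + cmod z) < c"
        proof -
          have "cmod w * (norm x + cmod z) \<le> cmod w * (norm x + cmod z + 1)"
            by (simp add: mult_left_mono)
          also have "\<dots> < c / (norm x + cmod z + 1) * (norm x + cmod z + 1)"
            using wd by (intro mult_strict_right_mono) (auto simp: d_def add_nonneg_pos)
          also have "\<dots> = c"
          proof -
            have pz: "norm x + cmod z + 1 \<noteq> 0" by (smt (verit) norm_ge_zero)
            then show ?thesis by simp
          qed
          finally show ?thesis .
        qed
        moreover have "cmod w ^ 2 < c"
        proof -
          have "cmod w < sqrt c" using wd by (simp add: d_def)
          then have "cmod w ^ 2 < (sqrt c) ^ 2" by (intro power_strict_mono) auto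
          then show ?thesis using cpos by simp
        qed
        ultimately have "?f (z + w) = c"
          using gm_step[of c x z w] min fz cpos by (simp add: c_def)
        then show "y \<in> S" by (simp add: S_def w_def)
      qed
    qed
    moreover have "z0 \<in> S" by (simp add: S_def c_def)
    ultimately have "S = UNIV" using clopen[of S] by auto
    moreover obtain y :: complex where "cmod y > max R c + 1"
    proof -
      have "max R c \<ge> 0" using R_def m0 f00 by simp
      then have "cmod (complex_of_real (max R c + 2)) > max R c + 1" by simp
      then show ?thesis using that by blast
    qed
    ultimately have "y \<in> S" "0 \<in> S" by auto
    then show False
      using far[of y] \<open>cmod y > max R c + 1\<close> by (simp add: S_def c_def) linarith
  qed
  then show ?thesis by (auto simp: c_def FF_def)
qed

lemma field_elem_structure:
  fixes x :: "'k::real_normed_field"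
  shows "(\<exists>a. x = of_real a) \<or> (\<exists>j a b. j * j = -1 \<and> x = of_real a + of_real b * j)"
proof -
  obtain z where hz: "x^2 - of_real (2 * Re z) * x + of_real ((cmod z)^2) = 0"
    using gm_quadratic by blast
  define a where "a = Re z"
  define b where "b = Im z"
  have cz: "(cmod z)^2 = a^2 + b^2" by (simp add: a_def b_def cmod_power2)
  have sq: "(x - of_real a) * (x - of_real a) = - of_real (b^2)"
  proof -
    have "(x - of_real a) * (x - of_real a) = x^2 - of_real (2 * a) * x + of_real (a^2 + b^2) - of_real (b^2)"
      by (simp add: algebra_simps power2_eq_square)
    also have "\<dots> = x^2 - of_real (2 * a) * x + of_real ((cmod z)^2) - of_real (b^2)"
      by (simp only: cz)
    also have "\<dots> = - of_real (b^2)" using hz by (simp add: a_def)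
    finally show ?thesis .
  qed
  show ?thesis
  proof (cases "b = 0")
    case True
    then have "x - of_real a = 0" using sq by simp
    then show ?thesis by auto
  next
    case False
    define j where "j = (x - of_real a) / of_real b"
    have "j * j = (x - of_real a) * (x - of_real a) / (of_real b * of_real b)"
      by (simp add: j_def)
    also have "\<dots> = -1" using False by (simp add: sq power2_eq_square)
    finally have "j * j = -1" .
    moreover have "x = of_real a + of_real b * j" using False by (simp add: j_def)
    ultimately show ?thesis by blast
  qed
qed

definition ee :: "'k::real_normed_field \<Rightarrow> real \<Rightarrow> 'k" where
  "ee j \<theta> = of_real (cos \<theta>) + of_real (sin \<theta>) * j"

lemma ee_add:
  assumes "j * j = -1"
  shows "ee j (\<theta> + \<phi>) = ee j \<theta> * ee j \<phi>"
proof -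
  have "ee j \<theta> * ee j \<phi> = of_real (cos \<theta> * cos \<phi>) + of_real (sin \<theta> * sin \<phi>) * (j * j) + of_real (sin \<theta> * cos \<phi> + cos \<theta> * sin \<phi>) * j"
    by (simp add: ee_def algebra_simps)
  also have "\<dots> = ee j (\<theta> + \<phi>)" using assms by (simp add: ee_def cos_add sin_add algebra_simps)
  finally show ?thesis by simp
qed

lemma ee_pow:
  assumes "j * j = -1"
  shows "ee j \<theta> ^ n = ee j (real n * \<theta>)"
proof (induction n)
  case 0 then show ?case by (simp add: ee_def)
next
  case (Suc n)
  have "ee j \<theta> ^ Suc n = ee j \<theta> * ee j (real n * \<theta>)" by (simp add: Suc)
  also have "\<dots> = ee j (\<theta> + real n * \<theta>)" by (simp add: ee_add[OF assms])
  finally show ?case by (simp add: algebra_simps)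
qed

lemma ee_norm_le: "norm (ee j \<theta>) \<le> 1 + norm j"
proof -
  have "norm (ee j \<theta>) \<le> norm (of_real (cos \<theta>) :: 'a) + norm (of_real (sin \<theta>) * j)"
    unfolding ee_def by (rule norm_triangle_ineq)
  also have "\<dots> = \<bar>cos \<theta>\<bar> + \<bar>sin \<theta>\<bar> * norm j" by (simp add: norm_mult)
  also have "\<dots> \<le> 1 + 1 * norm j"
    by (intro add_mono mult_right_mono) auto
  finally show ?thesis by simp
qed

lemma ee_norm:
  assumes j: "j * j = -1"
  shows "norm (ee j \<theta>) = 1"
proof -
  have le1: "norm (ee j t) \<le> 1" for t
  proof (rule ccontr)
    assume "\<not> norm (ee j t) \<le> 1"
    then obtain n where "1 + norm j < norm (ee j t) ^ n" using real_arch_pow by fastforce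
    also have "\<dots> = norm (ee j (real n * t))" by (simp add: ee_pow[OF j] norm_power[symmetric])
    finally show False using ee_norm_le[of j "real n * t"] by simp
  qed
  have "norm (ee j \<theta>) * norm (ee j (-\<theta>)) = 1"
    using ee_add[OF j, of \<theta> "-\<theta>"] by (simp add: norm_mult[symmetric] ee_def)
  then show ?thesis using le1[of \<theta>] le1[of "-\<theta>"]
    by (smt (verit) mult_left_le norm_ge_zero)
qed

lemma unit_structure:
  fixes u :: "'k::real_normed_field"
  assumes u: "norm u = 1"
  shows "\<exists>j \<theta>0. (j * j = -1 \<or> (j = 0 \<and> sin \<theta>0 = 0)) \<and> 0 \<le> \<theta>0 \<and> \<theta>0 < 2 * pi \<and> u = ee j \<theta>0"
proof (cases "\<exists>a. u = of_real a")
  case True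
  then obtain a where a: "u = of_real a" by blast
  then have "\<bar>a\<bar> = 1" using u by simp
  then have "a = 1 \<or> a = -1" by auto
  then show ?thesis
  proof
    assume "a = 1" then show ?thesis
      by (intro exI[of _ 0] exI[of _ 0]) (simp add: a ee_def)
  next
    assume "a = -1" then show ?thesis
      by (intro exI[of _ 0] exI[of _ pi]) (simp add: a ee_def)
  qed
next
  case False
  then obtain j a b where j: "j * j = -1" and uab: "u = of_real a + of_real b * j"
    using field_elem_structure[of u] by blast
  define z where "z = Complex a b"
  have z0: "z \<noteq> 0"
  proof
    assume "z = 0" then have "u = 0" by (simp add: uab z_def complex_eq_iff)
    then show False using u by simp
  qed
  define \<theta>1 where "\<theta>1 = Arg z"
  have ab: "a = cmod z * cos \<theta>1" "b = cmod z * sin \<theta>1"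
    using rcis_cmod_Arg[of z] unfolding \<theta>1_def z_def
    by (metis Re_rcis complex.sel(1), metis Im_rcis complex.sel(2))
  have "u = of_real (cmod z) * ee j \<theta>1"
    by (simp add: uab ab ee_def algebra_simps)
  then have "norm u = cmod z" using ee_norm[OF j] by (simp add: norm_mult)
  then have cz: "cmod z = 1" using u by simp
  define \<theta>0 where "\<theta>0 = (if \<theta>1 < 0 then \<theta>1 + 2 * pi else \<theta>1)"
  have "ee j \<theta>0 = ee j \<theta>1" by (simp add: \<theta>0_def ee_def)
  then have "u = ee j \<theta>0" using \<open>u = of_real (cmod z) * ee j \<theta>1\<close> cz by simp
  moreover have "0 \<le> \<theta>0 \<and> \<theta>0 < 2 * pi"
    using Arg_bounded[of z] unfolding \<theta>0_def \<theta>1_def by auto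
  ultimately show ?thesis using j by blast
qed

lemma nn_translate:
  fixes f :: "real \<Rightarrow> ennreal"
  assumes f: "f \<in> borel_measurable borel"
  shows "(\<integral>\<^sup>+x. f (x + c) \<partial>lborel) = (\<integral>\<^sup>+x. f x \<partial>lborel)"
proof -
  have "(\<integral>\<^sup>+x. f x \<partial>lborel) = (\<integral>\<^sup>+x. f x \<partial>(distr lborel borel ((+) c)))"
    by (simp add: lborel_distr_plus)
  also have "\<dots> = (\<integral>\<^sup>+x. f (c + x) \<partial>lborel)"
    by (rule nn_integral_distr) (use f in auto)
  finally show ?thesis by (simp add: add.commute)
qed

lemma periodic_nn_integral:
  fixes h :: "real \<Rightarrow> ennreal"
  assumes h[measurable]: "h \<in> borel_measurable borel" and per: "\<And>x. h (x + 2 * pi) = h x"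
    and t: "0 \<le> t" "t \<le> 2 * pi"
  shows "(\<integral>\<^sup>+\<theta>. h (\<theta> + t) * indicator {0..<2 * pi} \<theta> \<partial>lborel) = (\<integral>\<^sup>+\<theta>. h \<theta> * indicator {0..<2 * pi} \<theta> \<partial>lborel)"
proof -
  have "(\<integral>\<^sup>+\<theta>. h (\<theta> + t) * indicator {0..<2 * pi} \<theta> \<partial>lborel) =
        (\<integral>\<^sup>+\<theta>. (\<lambda>y. h y * indicator {t..<t + 2 * pi} y) (\<theta> + t) \<partial>lborel)"
    by (intro nn_integral_cong) (auto simp: indicator_def)
  also have "\<dots> = (\<integral>\<^sup>+y. h y * indicator {t..<t + 2 * pi} y \<partial>lborel)"
    by (rule nn_translate) measurable
  also have "\<dots> = (\<integral>\<^sup>+y. h y * indicator {t..<2 * pi} y + h y * indicator {2 * pi..<2 * pi + t} y \<partial>lborel)"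
    using t by (intro nn_integral_cong) (auto simp: indicator_def)
  also have "\<dots> = (\<integral>\<^sup>+y. h y * indicator {t..<2 * pi} y \<partial>lborel) + (\<integral>\<^sup>+y. h y * indicator {2 * pi..<2 * pi + t} y \<partial>lborel)"
    by (rule nn_integral_add) measurable
  also have "(\<integral>\<^sup>+y. h y * indicator {2 * pi..<2 * pi + t} y \<partial>lborel) =
        (\<integral>\<^sup>+y. (\<lambda>y. h y * indicator {2 * pi..<2 * pi + t} y) (y + 2 * pi) \<partial>lborel)"
    by (rule nn_translate[symmetric]) measurable
  also have "\<dots> = (\<integral>\<^sup>+y. h y * indicator {0..<t} y \<partial>lborel)"
    by (intro nn_integral_cong) (auto simp: per indicator_def)
  also have "(\<integral>\<^sup>+y. h y * indicator {t..<2 * pi} y \<partial>lborel) + (\<integral>\<^sup>+y. h y * indicator {0..<t} y \<partial>lborel) =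
        (\<integral>\<^sup>+y. h y * indicator {t..<2 * pi} y + h y * indicator {0..<t} y \<partial>lborel)"
    by (rule nn_integral_add[symmetric]) measurable
  also have "\<dots> = (\<integral>\<^sup>+\<theta>. h \<theta> * indicator {0..<2 * pi} \<theta> \<partial>lborel)"
    using t by (intro nn_integral_cong) (auto simp: indicator_def)
  finally show ?thesis .
qed

definition UU :: "real measure" where "UU = uniform_measure lborel {0..<2 * pi}"

lemma UU_prob: "prob_space UU"
  unfolding UU_def by (rule prob_space_uniform_measure) auto

lemma sets_UU[simp, measurable_cong]: "sets UU = sets borel"
  by (simp add: UU_def)

lemma space_UU[simp]: "space UU = UNIV"
  by (simp add: UU_def)

lemma periodic_UU:
  fixes h :: "real \<Rightarrow> ennreal"
  assumes h[measurable]: "h \<in> borel_measurable borel" and per: "\<And>x. h (x + 2 * pi) = h x"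
    and t: "0 \<le> t" "t \<le> 2 * pi"
  shows "(\<integral>\<^sup>+\<theta>. h (\<theta> + t) \<partial>UU) = (\<integral>\<^sup>+\<theta>. h \<theta> \<partial>UU)"
proof -
  have m2: "(\<lambda>\<theta>. h (\<theta> + t)) \<in> borel_measurable lborel" by measurable
  have h': "h \<in> borel_measurable lborel" by measurable
  have S: "{0..<2 * pi} \<in> sets lborel" by simp
  show ?thesis
    unfolding UU_def
    by (simp only: nn_integral_uniform_measure[OF m2 S] nn_integral_uniform_measure[OF h' S] periodic_nn_integral[OF h per t])
qed

lemma ee_zero_null:
  assumes j: "j * j = -1 \<or> j = 0"
  shows "{\<theta>. ee j \<theta> = 0} \<in> null_sets UU"
proof -
  have sub: "{\<theta>. ee j \<theta> = 0} \<subseteq> range (\<lambda>i::int. real_of_int i * (pi / 2))"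
  proof
    fix \<theta> assume "\<theta> \<in> {\<theta>. ee j \<theta> = 0}"
    then have e0: "ee j \<theta> = 0" by simp
    have "cos \<theta> = 0"
    proof (cases "j * j = -1")
      case True then show ?thesis using ee_norm[OF True, of \<theta>] e0 by simp
    next
      case False then have "j = 0" using j by simp
      then show ?thesis using e0 by (simp add: ee_def)
    qed
    then show "\<theta> \<in> range (\<lambda>i::int. real_of_int i * (pi / 2))"
      by (auto simp: cos_zero_iff_int)
  qed
  have nul: "range (\<lambda>i::int. real_of_int i * (pi / 2)) \<in> null_sets lborel"
    by (rule countable_imp_null_set_lborel) simp
  have eem: "ee j \<in> borel_measurable borel"
    unfolding ee_def by (intro borel_measurable_continuous_onI continuous_intros)
  have "ee j -` {0} \<in> sets borel" by (rule measurable_sets_borel[OF eem]) simp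
  then have ms: "{\<theta>. ee j \<theta> = 0} \<in> sets lborel" by (simp add: vimage_def)
  have l0: "emeasure lborel {\<theta>. ee j \<theta> = 0} = 0"
    using null_sets_subset[OF nul ms sub] by (simp add: null_setsD1)
  have "emeasure UU {\<theta>. ee j \<theta> = 0} = 0"
  proof -
    have "emeasure UU {\<theta>. ee j \<theta> = 0} = emeasure lborel ({0..<2 * pi} \<inter> {\<theta>. ee j \<theta> = 0}) / emeasure lborel {0..<2 * pi}"
      unfolding UU_def using ms by (simp add: emeasure_uniform_measure)
    also have "emeasure lborel ({0..<2 * pi} \<inter> {\<theta>. ee j \<theta> = 0}) = 0"
      using l0 by (metis Int_lower2 emeasure_eq_0 ms sets.Int atLeastLessThan_borel sets_lborel)
    finally show ?thesis by simp
  qed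
  then show ?thesis using ms by (simp add: null_sets_def)
qed

lemma borel_prob_finite: "borel_prob m \<Longrightarrow> finite_measure m"
  unfolding borel_prob_def using prob_space.finite_measure by blast

lemma space_borel_prob: "borel_prob m \<Longrightarrow> space m = UNIV"
  unfolding borel_prob_def by (metis sets_eq_imp_space_eq space_borel)

lemma common_invariant:
  fixes sm :: "'k::real_normed_field \<Rightarrow> 'a::{ab_group_add, polish_space} \<Rightarrow> 'a" and S :: "'a \<Rightarrow> 'a"
  assumes vs: "vector_space sm"
    and cont: "continuous_on UNIV (\<lambda>p::'k \<times> 'a. sm (fst p) (snd p))"
    and Slin: "\<And>c x. S (sm c x) = sm c (S x)"
    and Smeas: "S \<in> borel_measurable borel"
    and m: "borel_prob m" "invariant_measure S m" "emeasure m {0} = 0"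
    and u: "norm u = 1"
  shows "\<exists>\<nu>. borel_prob \<nu> \<and> emeasure \<nu> {0} = 0 \<and> invariant_measure S \<nu> \<and> invariant_measure (\<lambda>x. sm u (S x)) \<nu>"
proof -
  interpret VS: vector_space sm by fact
  obtain j \<theta>0 where j: "j * j = -1 \<or> (j = 0 \<and> sin \<theta>0 = 0)" and t0: "0 \<le> \<theta>0" "\<theta>0 < 2 * pi"
    and ue: "u = ee j \<theta>0"
    using unit_structure[OF u] by blast
  have eu: "ee j \<theta> * u = ee j (\<theta> + \<theta>0)" for \<theta>
  proof (cases "j * j = -1")
    case True then show ?thesis by (simp add: ue ee_add)
  next
    case False then have "j = 0 \<and> sin \<theta>0 = 0" using j by simp
    then show ?thesis by (simp add: ue ee_def cos_add)
  qed
  have mP: "prob_space m" and sm_: "sets m = sets borel" using m(1) by (auto simp: borel_prob_def)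
  have spm: "space m = UNIV" using space_borel_prob[OF m(1)] .
  interpret mS: sigma_finite_measure m using mP by (simp add: prob_space_imp_sigma_finite)
  define F where "F = (\<lambda>p::real \<times> 'a. sm (ee j (fst p)) (snd p))"
  have sprod: "sets (UU \<Otimes>\<^sub>M m) = sets (borel :: (real \<times> 'a) measure)"
  proof -
    have "sets (UU \<Otimes>\<^sub>M m) = sets (borel \<Otimes>\<^sub>M (borel :: 'a measure))" by (rule sets_pair_measure_cong[OF sets_UU sm_])
    also have "\<dots> = sets (borel :: (real \<times> 'a) measure)" by (subst borel_prod) (rule refl)
    finally show ?thesis .
  qed
  have contF: "continuous_on UNIV F"
  proof -
    have c1: "continuous_on UNIV (\<lambda>p::real \<times> 'a. (ee j (fst p), snd p))"
      unfolding ee_def by (intro continuous_intros)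
    have "continuous_on UNIV ((\<lambda>p::'k \<times> 'a. sm (fst p) (snd p)) \<circ> (\<lambda>p::real \<times> 'a. (ee j (fst p), snd p)))"
      by (rule continuous_on_compose[OF c1 continuous_on_subset[OF cont subset_UNIV]])
    then show ?thesis by (simp add: F_def comp_def)
  qed
  have Fb: "F \<in> borel_measurable borel" by (rule borel_measurable_continuous_onI[OF contF])
  have Fm: "F \<in> measurable (UU \<Otimes>\<^sub>M m) borel"
    by (subst measurable_cong_sets[OF sprod refl]) (rule Fb)
  have smb: "sm t \<in> borel_measurable borel" for t
  proof -
    have c1: "continuous_on UNIV (\<lambda>x::'a. (t, x))" by (intro continuous_intros)
    have "continuous_on UNIV ((\<lambda>p::'k \<times> 'a. sm (fst p) (snd p)) \<circ> (\<lambda>x. (t, x)))"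
      by (rule continuous_on_compose[OF c1 continuous_on_subset[OF cont subset_UNIV]])
    then show ?thesis by (intro borel_measurable_continuous_onI) (simp add: comp_def)
  qed
  define \<nu> where "\<nu> = distr (UU \<Otimes>\<^sub>M m) borel F"
  have snu: "sets \<nu> = sets borel" by (simp add: \<nu>_def)
  have formula: "emeasure \<nu> A = (\<integral>\<^sup>+t. emeasure m (sm (ee j t) -` A) \<partial>UU)" if A: "A \<in> sets borel" for A
  proof -
    have "emeasure \<nu> A = emeasure (UU \<Otimes>\<^sub>M m) (F -` A \<inter> space (UU \<Otimes>\<^sub>M m))"
      unfolding \<nu>_def by (rule emeasure_distr[OF Fm A])
    also have "\<dots> = (\<integral>\<^sup>+t. emeasure m (Pair t -` (F -` A \<inter> space (UU \<Otimes>\<^sub>M m))) \<partial>UU)"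
      by (rule mS.emeasure_pair_measure_alt) (rule measurable_sets[OF Fm A])
    also have "\<dots> = (\<integral>\<^sup>+t. emeasure m (sm (ee j t) -` A) \<partial>UU)"
      by (intro nn_integral_cong) (simp add: space_pair_measure spm F_def vimage_def)
    finally show ?thesis .
  qed
  have hmeas: "(\<lambda>t. emeasure m (sm (ee j t) -` A)) \<in> borel_measurable borel" if A: "A \<in> sets borel" for A
  proof -
    have "(\<lambda>t. emeasure m (Pair t -` (F -` A \<inter> space (UU \<Otimes>\<^sub>M m)))) \<in> borel_measurable UU"
      by (rule mS.measurable_emeasure_Pair) (rule measurable_sets[OF Fm A])
    then show ?thesis
      by (simp add: space_pair_measure spm F_def vimage_def measurable_def)
  qed
  have "prob_space \<nu>" unfolding \<nu>_def
    by (rule prob_space.prob_space_distr[OF prob_space_pair[OF UU_prob mP] Fm])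
  then have bp: "borel_prob \<nu>" by (simp add: borel_prob_def snu)
  have nu0: "emeasure \<nu> {0} = 0"
  proof -
    have "emeasure \<nu> {0} = (\<integral>\<^sup>+t. emeasure m (sm (ee j t) -` {0}) \<partial>UU)" by (rule formula) simp
    also have "\<dots> = (\<integral>\<^sup>+t. 0 \<partial>UU)"
    proof (rule nn_integral_cong_AE)
      have jj: "j * j = -1 \<or> j = 0" using j by auto
      from AE_not_in[OF ee_zero_null[OF jj]] show "AE t in UU. emeasure m (sm (ee j t) -` {0}) = 0"
      proof eventually_elim
        case (elim t)
        then have "sm (ee j t) -` {0} = {0}" by auto
        then show ?case using m(3) by simp
      qed
    qed
    finally show ?thesis by simp
  qed
  have invS: "invariant_measure S \<nu>"
    unfolding invariant_measure_def
  proof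
    fix A :: "'a set" assume A: "A \<in> sets borel"
    have SA: "S -` A \<in> sets borel" using measurable_sets_borel[OF Smeas A] .
    have "emeasure \<nu> (S -` A) = (\<integral>\<^sup>+t. emeasure m (sm (ee j t) -` (S -` A)) \<partial>UU)" by (rule formula[OF SA])
    also have "\<dots> = (\<integral>\<^sup>+t. emeasure m (sm (ee j t) -` A) \<partial>UU)"
    proof (rule nn_integral_cong)
      fix t
      have "sm (ee j t) -` (S -` A) = S -` (sm (ee j t) -` A)" by (auto simp: Slin)
      moreover have "sm (ee j t) -` A \<in> sets borel" using measurable_sets_borel[OF smb A] .
      ultimately show "emeasure m (sm (ee j t) -` (S -` A)) = emeasure m (sm (ee j t) -` A)"
        using m(2) unfolding invariant_measure_def by simp
    qed
    also have "\<dots> = emeasure \<nu> A" by (rule formula[OF A, symmetric])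
    finally show "emeasure \<nu> (S -` A) = emeasure \<nu> A" .
  qed
  have invuS: "invariant_measure (\<lambda>x. sm u (S x)) \<nu>"
    unfolding invariant_measure_def
  proof
    fix A :: "'a set" assume A: "A \<in> sets borel"
    have G: "(\<lambda>x. sm u (S x)) \<in> borel_measurable borel"
      using measurable_compose[OF Smeas smb[of u]] by (simp add: comp_def)
    have SA: "(\<lambda>x. sm u (S x)) -` A \<in> sets borel" using measurable_sets_borel[OF G A] .
    have "emeasure \<nu> ((\<lambda>x. sm u (S x)) -` A) = (\<integral>\<^sup>+t. emeasure m (sm (ee j t) -` ((\<lambda>x. sm u (S x)) -` A)) \<partial>UU)"
      by (rule formula[OF SA])
    also have "\<dots> = (\<integral>\<^sup>+t. emeasure m (sm (ee j (t + \<theta>0)) -` A) \<partial>UU)"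
    proof (rule nn_integral_cong)
      fix t
      have "sm (ee j t) -` ((\<lambda>x. sm u (S x)) -` A) = S -` (sm (ee j (t + \<theta>0)) -` A)"
        by (auto simp: Slin VS.scale_scale mult.commute eu[symmetric])
      moreover have "sm (ee j (t + \<theta>0)) -` A \<in> sets borel" using measurable_sets_borel[OF smb A] .
      ultimately show "emeasure m (sm (ee j t) -` ((\<lambda>x. sm u (S x)) -` A)) = emeasure m (sm (ee j (t + \<theta>0)) -` A)"
        using m(2) unfolding invariant_measure_def by simp
    qed
    also have "\<dots> = (\<integral>\<^sup>+t. emeasure m (sm (ee j t) -` A) \<partial>UU)"
      by (rule periodic_UU[OF hmeas[OF A]]) (use t0 in \<open>auto simp: ee_def\<close>)
    also have "\<dots> = emeasure \<nu> A" by (rule formula[OF A, symmetric])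
    finally show "emeasure \<nu> ((\<lambda>x. sm u (S x)) -` A) = emeasure \<nu> A" .
  qed
  show ?thesis using bp nu0 invS invuS by blast
qed

lemma invariant_funpow:
  assumes inv: "invariant_measure S m" and Sm: "S \<in> borel_measurable borel"
  shows "A \<in> sets borel \<Longrightarrow> (S ^^ n) -` A \<in> sets borel \<and> emeasure m ((S ^^ n) -` A) = emeasure m A"
proof (induction n arbitrary: A)
  case 0 then show ?case by simp
next
  case (Suc n)
  have SA: "S -` A \<in> sets borel" using measurable_sets_borel[OF Sm Suc.prems] .
  have eq: "(S ^^ Suc n) -` A = (S ^^ n) -` (S -` A)" by (simp add: funpow_Suc_right vimage_comp)
  show ?case using Suc.IH[OF SA] inv Suc.prems unfolding eq invariant_measure_def by simp
qed

lemma funpow_scaled: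
  assumes vs: "vector_space sm" and Tl: "\<And>c x. T (sm c x) = sm c (T x)"
  shows "((\<lambda>x. sm c (T x)) ^^ n) x = sm (c ^ n) ((T ^^ n) x)"
proof -
  interpret VS: vector_space sm by fact
  show ?thesis
  proof (induction n)
    case 0 then show ?case by simp
  next
    case (Suc n)
    then show ?case by (simp add: Tl VS.scale_scale)
  qed
qed

lemma shrink:
  fixes sm :: "'k::real_normed_field \<Rightarrow> 'a::{ab_group_add, polish_space} \<Rightarrow> 'a"
  assumes vs: "vector_space sm"
    and cont: "continuous_on UNIV (\<lambda>p::'k \<times> 'a. sm (fst p) (snd p))"
    and K: "compact K" "0 \<notin> K" and K': "compact K'" and t: "norm t < 1"
  shows "\<exists>N. \<forall>y\<in>K'. sm (t ^ N) y \<notin> K"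
proof -
  interpret VS: vector_space sm by fact
  define W where "W = (\<lambda>p::'k \<times> 'a. sm (fst p) (snd p)) -` (UNIV - K)"
  have "open (UNIV - K)" using compact_imp_closed[OF K(1)] by (simp add: open_Diff)
  then have oW: "open W" unfolding W_def by (rule open_vimage[OF _ cont])
  have "{0} \<times> K' \<subseteq> W" using K(2) by (auto simp: W_def)
  then obtain X0 where X0: "0 \<in> X0" "open X0" "X0 \<times> K' \<subseteq> W"
    using Elementary_Topology.tube_lemma[OF K' oW] by blast
  obtain d where d: "d > 0" "ball 0 d \<subseteq> X0" using X0(1,2) open_contains_ball by blast
  have "(\<lambda>n. t ^ n) \<longlonglongrightarrow> 0" by (rule LIMSEQ_power_zero[OF t])
  then obtain N where "norm (t ^ N) < d"
    using d(1) by (metis LIMSEQ_iff diff_zero le_refl)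
  then have "t ^ N \<in> X0" using d(2) by (auto simp: dist_norm)
  then show ?thesis using X0(3) by (intro exI[of _ N]) (auto simp: W_def)
qed

lemma approx_compact:
  fixes m :: "'a::polish_space measure"
  assumes m: "borel_prob m" and B: "B \<in> sets borel" and mB: "emeasure m B = 1" and e: "e > 0"
  shows "\<exists>K. compact K \<and> K \<subseteq> B \<and> measure m (UNIV - K) < e"
proof -
  have mP: "prob_space m" and sm: "sets m = sets borel" using m by (auto simp: borel_prob_def)
  interpret prob_space m by (rule mP)
  have spm: "space m = UNIV" using space_borel_prob[OF m] .
  have "emeasure m B = (SUP K \<in> {K. K \<subseteq> B \<and> compact K}. emeasure m K)"
    by (rule inner_regular[OF sm _ B]) simp
  moreover have "ennreal (1 - e) < 1" using e by (simp add: ennreal_lessI)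
  ultimately have "ennreal (1 - e) < (SUP K \<in> {K. K \<subseteq> B \<and> compact K}. emeasure m K)" using mB by simp
  then obtain K where K: "K \<subseteq> B" "compact K" "ennreal (1 - e) < emeasure m K"
    by (auto simp: less_SUP_iff)
  have Ks: "K \<in> sets m" using compact_imp_closed[OF K(2)] sm by (simp add: borel_closed)
  have "1 - e < measure m K"
  proof (cases "e \<le> 1")
    case True then show ?thesis using K(3) e by (auto simp: emeasure_eq_measure ennreal_less_iff)
  next
    case False
    have "0 \<le> measure m K" by simp
    then show ?thesis using False by linarith
  qed
  moreover have "measure m (UNIV - K) = 1 - measure m K"
    using prob_compl[OF Ks] spm by simp
  ultimately show ?thesis using K by (intro exI[of _ K]) auto
qed

lemma sing_from_approx:
  fixes m1 m2 :: "'a::topological_space measure"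
  assumes m1: "borel_prob m1" and m2: "borel_prob m2"
    and approx: "\<And>n::nat. \<exists>B C. B \<in> sets borel \<and> C \<in> sets borel \<and> B \<inter> C = {} \<and>
                   measure m1 (UNIV - B) \<le> (1/2)^n \<and> measure m2 (UNIV - C) \<le> (1/2)^n"
  shows "mutually_singular m1 m2"
proof -
  obtain B C where BC: "\<And>n. B n \<in> sets borel" "\<And>n. C n \<in> sets borel" "\<And>n. B n \<inter> C n = {}"
     "\<And>n. measure m1 (UNIV - B n) \<le> (1/2)^n" "\<And>n. measure m2 (UNIV - C n) \<le> (1/2)^n"
  proof -
    have "\<forall>n. \<exists>p. fst p \<in> sets borel \<and> snd p \<in> sets borel \<and> fst p \<inter> snd p = {} \<and>
                   measure m1 (UNIV - fst p) \<le> (1/2)^n \<and> measure m2 (UNIV - snd p) \<le> (1/2)^n"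
      using approx by fastforce
    from choice[OF this] obtain f where f: "\<And>n. fst (f n) \<in> sets borel \<and> snd (f n) \<in> sets borel \<and> fst (f n) \<inter> snd (f n) = {} \<and>
                   measure m1 (UNIV - fst (f n)) \<le> (1/2)^n \<and> measure m2 (UNIV - snd (f n)) \<le> (1/2)^n" by blast
    show ?thesis by (rule that[of "\<lambda>n. fst (f n)" "\<lambda>n. snd (f n)"]) (use f in auto)
  qed
  have s1: "sets m1 = sets borel" and s2: "sets m2 = sets borel" using m1 m2 by (auto simp: borel_prob_def)
  interpret P1: prob_space m1 using m1 by (simp add: borel_prob_def)
  interpret P2: prob_space m2 using m2 by (simp add: borel_prob_def)
  have sp1: "space m1 = UNIV" and sp2: "space m2 = UNIV" using space_borel_prob m1 m2 by auto
  have small: "x \<le> 0" if "\<And>k. j \<le> k \<Longrightarrow> x \<le> c * (1/2)^k" "c \<ge> 0" for x :: real and j c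
  proof (rule ccontr)
    assume "\<not> x \<le> 0"
    then have "x / (c + 1) > 0" using that(2) by simp
    then obtain k where k: "(1/2::real)^k < x / (c + 1)" using real_arch_pow_inv[of "x / (c+1)" "1/2"] by auto
    have "(1/2::real)^(max j k) \<le> (1/2)^k" by (rule power_decreasing) auto
    then have "(1/2::real)^(max j k) \<le> x / (c + 1)" using k by linarith
    then have "c * (1/2)^(max j k) \<le> c * (x / (c + 1))" using that(2) by (intro mult_left_mono) auto
    also have "\<dots> < x" using that(2) \<open>\<not> x \<le> 0\<close> by (simp add: field_simps)
    finally show False using that(1)[of "max j k"] by simp
  qed
  define A where "A = (\<Union>j. \<Inter>k\<in>{j..}. C k)"
  have Ab: "A \<in> sets borel" unfolding A_def using BC(2) by auto
  have "emeasure m1 A = 0"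
  proof -
    have "(\<Inter>k\<in>{j..}. C k) \<in> null_sets m1" for j
    proof -
      have Dm: "(\<Inter>k\<in>{j..}. C k) \<in> sets m1" using BC(2) s1 by auto
      have "measure m1 (\<Inter>k\<in>{j..}. C k) \<le> 0"
      proof (rule small[of j _ 1])
        fix k assume "j \<le> k"
        then have "(\<Inter>k\<in>{j..}. C k) \<subseteq> UNIV - B k" using BC(3)[of k] by auto
        then have "measure m1 (\<Inter>k\<in>{j..}. C k) \<le> measure m1 (UNIV - B k)"
          using BC(1) s1 by (intro P1.finite_measure_mono) auto
        then show "measure m1 (\<Inter>k\<in>{j..}. C k) \<le> 1 * (1/2)^k" using BC(4)[of k] by simp
      qed simp
      then show ?thesis using Dm by (simp add: P1.emeasure_eq_measure null_sets_def measure_nonneg antisym)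
    qed
    then have "A \<in> null_sets m1" unfolding A_def by (rule null_sets_UN)
    then show ?thesis by (rule null_setsD1)
  qed
  moreover have "emeasure m2 (UNIV - A) = 0"
  proof -
    have Am: "UNIV - A \<in> sets m2" using Ab s2 by auto
    have "measure m2 (UNIV - A) \<le> 0"
    proof (rule small[of 0 _ 2])
      fix j :: nat
      define D where "D k = UNIV - C (k + j)" for k
      have Dm: "range D \<subseteq> sets m2" using BC(2) s2 by (auto simp: D_def)
      have g: "summable (\<lambda>k. (1/2::real)^(k + j))"
        by (simp add: power_add summable_mult2 summable_geometric)
      have Dle: "measure m2 (D k) \<le> (1/2)^(k + j)" for k using BC(5) by (simp add: D_def)
      have sD: "summable (\<lambda>k. measure m2 (D k))"
        by (rule summable_comparison_test'[OF g]) (simp add: Dle)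
      have "UNIV - A \<subseteq> (\<Union>k. D k)"
      proof
        fix x assume "x \<in> UNIV - A"
        then obtain k where k: "k \<ge> j" "x \<notin> C k" unfolding A_def by blast
        then have "x \<in> D (k - j)" by (simp add: D_def)
        then show "x \<in> (\<Union>k. D k)" by blast
      qed
      then have "measure m2 (UNIV - A) \<le> measure m2 (\<Union>k. D k)"
        using Dm Am by (intro P2.finite_measure_mono) auto
      also have "\<dots> \<le> (\<Sum>k. measure m2 (D k))"
        by (rule P2.finite_measure_subadditive_countably[OF Dm sD])
      also have "\<dots> \<le> (\<Sum>k. (1/2::real)^(k + j))"
        by (rule suminf_le[OF Dle sD g])
      also have "\<dots> = 2 * (1/2)^j"
      proof -
        have "(\<Sum>k. (1/2::real)^(k + j)) = (\<Sum>k. (1/2)^j * (1/2)^k)" by (simp add: power_add mult.commute)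
        also have "\<dots> = (1/2)^j * (\<Sum>k. (1/2::real)^k)" by (rule suminf_mult) (simp add: summable_geometric)
        also have "(\<Sum>k. (1/2::real)^k) = 2" by (subst suminf_geometric) auto
        finally show ?thesis by simp
      qed
      finally show "measure m2 (UNIV - A) \<le> 2 * (1/2)^j" .
    qed simp
    then show ?thesis using Am by (simp add: P2.emeasure_eq_measure measure_nonneg antisym)
  qed
  ultimately show ?thesis unfolding mutually_singular_def using Ab by blast
qed

lemma return_zero_eq:
  fixes m :: "'a::{polish_space, zero} measure"
  assumes m: "borel_prob m" and m0: "emeasure m {0} = 1"
  shows "m = return borel 0"
proof (rule measure_eqI)
  show "sets m = sets (return borel 0)" using m by (simp add: borel_prob_def)
next
  interpret prob_space m using m by (simp add: borel_prob_def)
  have sm: "sets m = sets borel" using m by (simp add: borel_prob_def)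
  have spm: "space m = UNIV" using space_borel_prob[OF m] .
  fix B assume "B \<in> sets m"
  then have B: "B \<in> sets borel" using sm by simp
  have z: "{0} \<in> sets m" using sm by simp
  have c0: "emeasure m (UNIV - {0}) = 0"
    using emeasure_compl[OF z] m0 spm emeasure_space_1 by simp
  have "emeasure m (B - {0}) + emeasure m (B \<inter> {0}) = emeasure m ((B - {0}) \<union> (B \<inter> {0}))"
    by (rule plus_emeasure) (use B sm in auto)
  also have "(B - {0}) \<union> (B \<inter> {0}) = B" by auto
  finally have "emeasure m B = emeasure m (B - {0}) + emeasure m (B \<inter> {0})" by simp
  also have "emeasure m (B - {0}) = 0"
  proof -
    have "emeasure m (B - {0}) \<le> emeasure m (UNIV - {0})"
      by (rule emeasure_mono) (use sm in auto)
    then show ?thesis using c0 by simp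
  qed
  also have "emeasure m (B \<inter> {0}) = indicator B 0"
  proof (cases "0 \<in> B")
    case True then have "B \<inter> {0} = {0}" by auto
    then show ?thesis using m0 True by simp
  next
    case False then have "B \<inter> {0} = {}" by auto
    then show ?thesis using False by simp
  qed
  finally show "emeasure m B = emeasure (return borel 0) B"
    using B by (simp add: emeasure_return)
qed

lemma condition_measure:
  fixes m :: "'a::{polish_space, zero} measure"
  assumes bp: "borel_prob m" and inv: "invariant_measure S m" and S0: "S 0 = 0"
    and Sm: "S \<in> borel_measurable borel" and ne: "m \<noteq> return borel 0"
  shows "\<exists>m'. borel_prob m' \<and> invariant_measure S m' \<and> emeasure m' {0} = 0"
proof -
  interpret prob_space m using bp by (simp add: borel_prob_def)
  have sm: "sets m = sets borel" using bp by (simp add: borel_prob_def)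
  have spm: "space m = UNIV" using space_borel_prob[OF bp] .
  define A where "A = UNIV - {0 :: 'a}"
  have Am: "A \<in> sets m" using sm by (simp add: A_def)
  have mA0: "emeasure m A \<noteq> 0"
  proof
    assume h: "emeasure m A = 0"
    have pA: "prob A = 0" using h by (simp add: emeasure_eq_measure)
    have "prob (space m - A) = 1 - prob A" by (rule prob_compl[OF Am])
    moreover have "space m - A = {0}" by (auto simp: spm A_def)
    ultimately have "prob {0} = 1" using pA by simp
    then have "emeasure m {0} = 1" by (simp add: emeasure_eq_measure)
    then have "m = return borel 0" by (rule return_zero_eq[OF bp])
    with ne show False by simp
  qed
  define m' where "m' = uniform_measure m A"
  have "prob_space m'" unfolding m'_def
    by (rule prob_space_uniform_measure[OF mA0]) simp
  moreover have sm': "sets m' = sets borel" by (simp add: m'_def sm)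
  ultimately have bp': "borel_prob m'" by (simp add: borel_prob_def)
  have "emeasure m' {0} = 0"
    unfolding m'_def using Am sm by (simp add: emeasure_uniform_measure A_def)
  moreover have "invariant_measure S m'"
    unfolding invariant_measure_def
  proof
    fix B :: "'a set" assume B: "B \<in> sets borel"
    have SB: "S -` B \<in> sets borel" using measurable_sets_borel[OF Sm B] .
    have e1: "emeasure m (S -` B) = emeasure m B" using inv B by (simp add: invariant_measure_def)
    have split: "measure m X = measure m (A \<inter> X) + measure m ({0} \<inter> X)" if X: "X \<in> sets borel" for X
    proof -
      have "measure m X = measure m ((A \<inter> X) \<union> ({0} \<inter> X))"
        by (rule arg_cong[where f="measure m"]) (auto simp: A_def)
      also have "\<dots> = measure m (A \<inter> X) + measure m ({0} \<inter> X)"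
        using X sm by (intro finite_measure_Union) (auto simp: A_def)
      finally show ?thesis .
    qed
    have "{0} \<inter> S -` B = {0} \<inter> B" using S0 by auto
    then have "measure m (A \<inter> S -` B) = measure m (A \<inter> B)"
      using split[OF SB] split[OF B] e1 by (simp add: emeasure_eq_measure)
    then have "emeasure m (A \<inter> S -` B) = emeasure m (A \<inter> B)"
      by (simp add: emeasure_eq_measure)
    then show "emeasure m' (S -` B) = emeasure m' B"
      unfolding m'_def using B SB sm Am by (simp add: emeasure_uniform_measure)
  qed
  ultimately show ?thesis using bp' by blast
qed

lemma scaled_cont:
  fixes sm :: "'k::real_normed_field \<Rightarrow> 'a::{ab_group_add, polish_space} \<Rightarrow> 'a"
  assumes cont: "continuous_on UNIV (\<lambda>p::'k \<times> 'a. sm (fst p) (snd p))"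
    and Tc: "continuous_on UNIV T"
  shows "continuous_on UNIV (\<lambda>x. sm c (T x))"
proof -
  have c1: "continuous_on UNIV (\<lambda>x. (c, T x))" by (intro continuous_intros Tc)
  have "continuous_on UNIV ((\<lambda>p::'k \<times> 'a. sm (fst p) (snd p)) \<circ> (\<lambda>x. (c, T x)))"
    by (rule continuous_on_compose[OF c1 continuous_on_subset[OF cont subset_UNIV]])
  then show ?thesis by (simp add: comp_def)
qed

lemma orth_lt:
  fixes sm :: "'k::real_normed_field \<Rightarrow> 'a::{ab_group_add, polish_space} \<Rightarrow> 'a"
  assumes vs: "vector_space sm"
    and cont: "continuous_on UNIV (\<lambda>p::'k \<times> 'a. sm (fst p) (snd p))"
    and Tl: "\<And>c x. T (sm c x) = sm c (T x)" and Tc: "continuous_on UNIV T"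
    and ab: "norm a < norm b"
    and m1: "borel_prob m1" "invariant_measure (\<lambda>x. sm a (T x)) m1" "emeasure m1 {0} = 0"
    and m2: "borel_prob m2" "invariant_measure (\<lambda>x. sm b (T x)) m2" "emeasure m2 {0} = 0"
  shows "mutually_singular m1 m2"
proof (rule sing_from_approx[OF m1(1) m2(1)])
  interpret VS: vector_space sm by fact
  fix n :: nat
  define e :: real where "e = (1/2)^n"
  have e: "e > 0" by (simp add: e_def)
  have b0: "b \<noteq> 0" using ab by auto
  define Sa where "Sa = (\<lambda>x. sm a (T x))"
  define Sb where "Sb = (\<lambda>x. sm b (T x))"
  have Sam: "Sa \<in> borel_measurable borel" unfolding Sa_def
    by (rule borel_measurable_continuous_onI[OF scaled_cont[OF cont Tc]])
  have Sbm: "Sb \<in> borel_measurable borel" unfolding Sb_def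
    by (rule borel_measurable_continuous_onI[OF scaled_cont[OF cont Tc]])
  interpret P1: prob_space m1 using m1(1) by (simp add: borel_prob_def)
  interpret P2: prob_space m2 using m2(1) by (simp add: borel_prob_def)
  have s1: "sets m1 = sets borel" and s2: "sets m2 = sets borel" using m1(1) m2(1) by (auto simp: borel_prob_def)
  have sp1: "space m1 = UNIV" and sp2: "space m2 = UNIV" using space_borel_prob m1(1) m2(1) by auto
  have "emeasure m1 (UNIV - {0}) = 1"
    using emeasure_compl[of "{0}" m1] s1 sp1 m1(3) P1.emeasure_space_1 by simp
  then have "\<exists>K. compact K \<and> K \<subseteq> UNIV - {0} \<and> measure m1 (UNIV - K) < e"
    by (intro approx_compact[OF m1(1) _ _ e]) auto
  then obtain K where K: "compact K" "K \<subseteq> UNIV - {0}" "measure m1 (UNIV - K) < e"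
    by blast
  have "emeasure m2 UNIV = 1" using P2.emeasure_space_1 sp2 by simp
  then have "\<exists>K. compact K \<and> K \<subseteq> UNIV \<and> measure m2 (UNIV - K) < e"
    by (intro approx_compact[OF m2(1) _ _ e]) auto
  then obtain K' where K': "compact K'" "measure m2 (UNIV - K') < e"
    by blast
  have t: "norm (a / b) < 1" using ab b0 by (simp add: norm_divide)
  obtain N where N: "\<And>y. y \<in> K' \<Longrightarrow> sm ((a / b) ^ N) y \<notin> K"
    using shrink[OF vs cont K(1) _ K'(1) t] K(2) by blast
  have Kb: "K \<in> sets borel" using compact_imp_closed[OF K(1)] by (simp add: borel_closed)
  have K'b: "K' \<in> sets borel" using compact_imp_closed[OF K'(1)] by (simp add: borel_closed)
  define B where "B = (Sa ^^ N) -` K"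
  define C where "C = (Sb ^^ N) -` K'"
  have Bb: "B \<in> sets borel" and eB: "emeasure m1 B = emeasure m1 K"
    using invariant_funpow[OF m1(2)[folded Sa_def] Sam Kb] by (auto simp: B_def)
  have Cb: "C \<in> sets borel" and eC: "emeasure m2 C = emeasure m2 K'"
    using invariant_funpow[OF m2(2)[folded Sb_def] Sbm K'b] by (auto simp: C_def)
  have "measure m1 (UNIV - B) = measure m1 (UNIV - K)"
  proof -
    have "measure m1 B = measure m1 K" using eB by (simp add: P1.emeasure_eq_measure)
    then show ?thesis using P1.prob_compl[of B] P1.prob_compl[of K] Bb Kb s1 sp1 by simp
  qed
  moreover have "measure m2 (UNIV - C) = measure m2 (UNIV - K')"
  proof -
    have "measure m2 C = measure m2 K'" using eC by (simp add: P2.emeasure_eq_measure)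
    then show ?thesis using P2.prob_compl[of C] P2.prob_compl[of K'] Cb K'b s2 sp2 by simp
  qed
  moreover have "B \<inter> C = {}"
  proof (rule ccontr)
    assume "B \<inter> C \<noteq> {}"
    then obtain x where x: "x \<in> B" "x \<in> C" by blast
    define y where "y = (T ^^ N) x"
    have yK: "sm (a ^ N) y \<in> K" using x(1) funpow_scaled[OF vs Tl, where c=a and n=N and x=x]
      by (simp add: B_def Sa_def y_def)
    have yK': "sm (b ^ N) y \<in> K'" using x(2) funpow_scaled[OF vs Tl, where c=b and n=N and x=x]
      by (simp add: C_def Sb_def y_def)
    have pw: "(a / b)^N * b^N = a^N" using b0 by (simp add: power_divide)
    have "sm ((a / b) ^ N) (sm (b ^ N) y) = sm (a ^ N) y"
      by (simp add: VS.scale_scale pw)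
    then show False using N[OF yK'] yK by metis
  qed
  ultimately show "\<exists>B C. B \<in> sets borel \<and> C \<in> sets borel \<and> B \<inter> C = {} \<and>
         measure m1 (UNIV - B) \<le> (1/2)^n \<and> measure m2 (UNIV - C) \<le> (1/2)^n"
    using Bb Cb K(3) K'(2) unfolding e_def by (intro exI[of _ B] exI[of _ C]) auto
qed

lemma zero_scalar_no_measure:
  fixes sm :: "'k::real_normed_field \<Rightarrow> 'a::{ab_group_add, polish_space} \<Rightarrow> 'a"
  assumes vs: "vector_space sm"
    and m: "borel_prob m" "invariant_measure (\<lambda>x. sm 0 (T x)) m"
  shows "m = return borel 0"
proof (rule return_zero_eq[OF m(1)])
  interpret VS: vector_space sm by fact
  interpret P: prob_space m using m(1) by (simp add: borel_prob_def)
  have h0: "{0::'a} \<in> sets borel" by (rule borel_closed) simp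
  have "emeasure m ((\<lambda>x. sm 0 (T x)) -` {0}) = emeasure m {0}"
    using m(2) h0 unfolding invariant_measure_def by blast
  moreover have "(\<lambda>x. sm 0 (T x)) -` {0} = space m" using space_borel_prob[OF m(1)] by auto
  ultimately show "emeasure m {0} = 1" using P.emeasure_space_1 by simp
qed

theorem corollary3p6:
  fixes smult_op :: "'k::real_normed_field \<Rightarrow> 'a::{ab_group_add,polish_space} \<Rightarrow> 'a"
    and T :: "'a \<Rightarrow> 'a" and a b :: 'k
  assumes "polish_tvs smult_op"
    and "Vector_Spaces.linear smult_op smult_op T"
    and "continuous_on UNIV T"
    and "\<exists>m. borel_prob m \<and> invariant_measure (\<lambda>x. smult_op a (T x)) m \<and> m \<noteq> return borel 0"
    and "\<exists>m. borel_prob m \<and> invariant_measure (\<lambda>x. smult_op b (T x)) m \<and> m \<noteq> return borel 0"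
  shows "(orthogonal_ops (\<lambda>x. smult_op a (T x)) (\<lambda>x. smult_op b (T x)) \<longleftrightarrow> norm a \<noteq> norm b)
    \<and> (norm a \<noteq> norm b \<longrightarrow> orthogonal_ops (\<lambda>x. smult_op a (T x)) (\<lambda>x. smult_op b (T x)))
    \<and> (norm a = norm b \<longrightarrow> (\<exists>m. borel_prob m \<and> m \<noteq> return borel 0 \<and>
          invariant_measure (\<lambda>x. smult_op a (T x)) m \<and> invariant_measure (\<lambda>x. smult_op b (T x)) m))"
proof -
  have vs: "vector_space smult_op"
    and cont: "continuous_on UNIV (\<lambda>p::'k \<times> 'a. smult_op (fst p) (snd p))"
    using assms(1) unfolding polish_tvs_def by auto
  interpret VS: vector_space smult_op by (rule vs)
  interpret L: Vector_Spaces.linear smult_op smult_op T by (rule assms(2))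
  have Tl: "\<And>c x. T (smult_op c x) = smult_op c (T x)" by (rule L.scale)
  have Tc: "continuous_on UNIV T" by (rule assms(3))
  have T0: "T 0 = 0" using Tl[of 0 0] by simp
  have Sam: "(\<lambda>x. smult_op a (T x)) \<in> borel_measurable borel"
    by (rule borel_measurable_continuous_onI[OF scaled_cont[OF cont Tc]])
  have a0: "a \<noteq> 0"
  proof
    assume "a = 0"
    with assms(4) obtain m where "borel_prob m" "invariant_measure (\<lambda>x. smult_op 0 (T x)) m" "m \<noteq> return borel 0"
      by auto
    with zero_scalar_no_measure[OF vs] show False by blast
  qed
  have orth: "orthogonal_ops (\<lambda>x. smult_op a (T x)) (\<lambda>x. smult_op b (T x))" if ne: "norm a \<noteq> norm b"
    unfolding orthogonal_ops_def
  proof (intro allI impI)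
    fix m1 m2 assume h: "borel_prob m1 \<and> invariant_measure (\<lambda>x. smult_op a (T x)) m1 \<and>
              borel_prob m2 \<and> invariant_measure (\<lambda>x. smult_op b (T x)) m2 \<and>
              emeasure m1 {0} = 0 \<and> emeasure m2 {0} = 0"
    show "mutually_singular m1 m2"
    proof (cases "norm a < norm b")
      case True
      then show ?thesis using orth_lt[OF vs cont Tl Tc True] h by blast
    next
      case False
      then have "norm b < norm a" using ne by simp
      then have "mutually_singular m2 m1" using orth_lt[OF vs cont Tl Tc] h by blast
      then obtain A where A: "A \<in> sets borel" "emeasure m2 A = 0" "emeasure m1 (UNIV - A) = 0"
        unfolding mutually_singular_def by blast
      have "UNIV - (UNIV - A) = A" by auto
      then show ?thesis unfolding mutually_singular_def using A
        by (intro bexI[of _ "UNIV - A"]) auto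
    qed
  qed
  have eqc: "\<exists>m. borel_prob m \<and> emeasure m {0} = 0 \<and>
          invariant_measure (\<lambda>x. smult_op a (T x)) m \<and> invariant_measure (\<lambda>x. smult_op b (T x)) m"
    if eq: "norm a = norm b"
  proof -
    define u where "u = b / a"
    have b0: "b \<noteq> 0" using eq a0 by (metis norm_eq_zero)
    have u: "norm u = 1" using eq a0 b0 by (simp add: u_def norm_divide)
    obtain m where m: "borel_prob m" "invariant_measure (\<lambda>x. smult_op a (T x)) m" "m \<noteq> return borel 0"
      using assms(4) by blast
    obtain m' where m': "borel_prob m'" "invariant_measure (\<lambda>x. smult_op a (T x)) m'" "emeasure m' {0} = 0"
      using condition_measure[OF m(1) m(2) _ Sam m(3)] T0 by auto
    have Slin: "\<And>c x. (\<lambda>x. smult_op a (T x)) (smult_op c x) = smult_op c ((\<lambda>x. smult_op a (T x)) x)"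
      by (simp add: Tl VS.scale_left_commute)
    obtain \<nu> where \<nu>: "borel_prob \<nu>" "emeasure \<nu> {0} = 0" "invariant_measure (\<lambda>x. smult_op a (T x)) \<nu>"
      "invariant_measure (\<lambda>x. smult_op u ((\<lambda>x. smult_op a (T x)) x)) \<nu>"
      using common_invariant[OF vs cont Slin Sam m'(1) m'(2) m'(3) u] by blast
    have "(\<lambda>x. smult_op u ((\<lambda>x. smult_op a (T x)) x)) = (\<lambda>x. smult_op b (T x))"
    proof -
      show ?thesis using a0 b0 by (simp add: VS.scale_scale u_def)
    qed
    then show ?thesis using \<nu> by auto
  qed
  have noorth: "\<not> orthogonal_ops (\<lambda>x. smult_op a (T x)) (\<lambda>x. smult_op b (T x))" if eq: "norm a = norm b"
  proof
    assume o: "orthogonal_ops (\<lambda>x. smult_op a (T x)) (\<lambda>x. smult_op b (T x))"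
    obtain \<nu> where \<nu>: "borel_prob \<nu>" "emeasure \<nu> {0} = 0"
      "invariant_measure (\<lambda>x. smult_op a (T x)) \<nu>" "invariant_measure (\<lambda>x. smult_op b (T x)) \<nu>"
      using eqc[OF eq] by blast
    then have "mutually_singular \<nu> \<nu>" using o unfolding orthogonal_ops_def by blast
    then obtain A where A: "A \<in> sets borel" "emeasure \<nu> A = 0" "emeasure \<nu> (UNIV - A) = 0"
      unfolding mutually_singular_def by blast
    interpret P: prob_space \<nu> using \<nu>(1) by (simp add: borel_prob_def)
    have s: "sets \<nu> = sets borel" using \<nu>(1) by (simp add: borel_prob_def)
    have "emeasure \<nu> A + emeasure \<nu> (UNIV - A) = emeasure \<nu> (A \<union> (UNIV - A))"
      by (rule plus_emeasure) (use A s in auto)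
    also have "A \<union> (UNIV - A) = space \<nu>" using space_borel_prob[OF \<nu>(1)] by auto
    finally show False using A P.emeasure_space_1 by simp
  qed
  have ret: "\<nu> \<noteq> return borel 0" if "emeasure \<nu> {0} = 0" for \<nu> :: "'a measure"
  proof
    assume "\<nu> = return borel 0"
    then have "emeasure \<nu> {0} = 1" by (simp add: emeasure_return)
    with that show False by simp
  qed
  show ?thesis
  proof (intro conjI impI)
    show "orthogonal_ops (\<lambda>x. smult_op a (T x)) (\<lambda>x. smult_op b (T x)) = (norm a \<noteq> norm b)"
      using orth noorth by blast
  next
    assume "norm a \<noteq> norm b" then show "orthogonal_ops (\<lambda>x. smult_op a (T x)) (\<lambda>x. smult_op b (T x))"
      by (rule orth)
  next
    assume "norm a = norm b"
    then obtain \<nu> where \<nu>: "borel_prob \<nu>" "emeasure \<nu> {0} = 0"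
      "invariant_measure (\<lambda>x. smult_op a (T x)) \<nu>" "invariant_measure (\<lambda>x. smult_op b (T x)) \<nu>"
      using eqc by blast
    then show "\<exists>m. borel_prob m \<and> m \<noteq> return borel 0 \<and>
          invariant_measure (\<lambda>x. smult_op a (T x)) m \<and> invariant_measure (\<lambda>x. smult_op b (T x)) m"
      using ret[OF \<nu>(2)] by blast
  qed
qed

end
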